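(* Let $S,T$ be ordered trees, let $f\colon T\to S$ be a rigid surjection, and let $T'$ be a subtree of $T$. Then $f[T']$ is a subtree of $S$ and $f\upharpoonright T'\colon T'\to f[T']$ is a rigid surjection.
   Context: A tree is a finite, non-empty partially ordered set $(T,\sqsubseteq_T)$ with a smallest element (the root) such that the set of predecessors of each element is linearly ordered; each node counts as its own predecessor and successor. For $v,w\in T$, $v\wedge_T w$ is the $\sqsubseteq_T$-largest common predecessor. A tree is ordered if the set of immediate successors of each node carries a fixed linear order; this induces the lexicographic linear order $\leq_T$: $v\leq_T w$ if $v\sqsubseteq_T w$, and for incomparable $v,w$, $v\leq_T w$ iff the immediate successor of $v\wedge_T w$ below $v$ precedes the one below $w$. A subtree of $T$ is a non-empty subset closed downward under $\sqsubseteq_T$; it is an ordered tree with the inherited orders. A morphism $e\colon S\to T$ satisfies $e(v\wedge_S w)=e(v)\wedge_T e(w)$, is monotone from $\leq_S$ to $\leq_T$, and maps root to root. A function $f\colon T\to S$ is a rigid surjection if there is a morphism $e\colon S\to T$ with $f\circ e={\rm id}_S$ and $e(f(w))\sqsubseteq_T w$ for all $w\in T$. *)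

theory Defs
  imports Main
begin

text \<open>An ordered tree: a carrier set, the tree order (\<sqsubseteq>), and a relation
  giving the fixed linear order on the immediate successors of each node.\<close>

record 'a otree =
  carrier :: "'a set"
  tle :: "'a \<Rightarrow> 'a \<Rightarrow> bool"
  sib :: "'a \<Rightarrow> 'a \<Rightarrow> bool"

definition tlt :: "('a, 'm) otree_scheme \<Rightarrow> 'a \<Rightarrow> 'a \<Rightarrow> bool" where
  "tlt T v w \<longleftrightarrow> tle T v w \<and> v \<noteq> w"

definition is_tree :: "('a, 'm) otree_scheme \<Rightarrow> bool" where
  "is_tree T \<longleftrightarrow>
     finite (carrier T) \<and> carrier T \<noteq> {} \<and>
     (\<forall>v\<in>carrier T. tle T v v) \<and>
     (\<forall>u\<in>carrier T. \<forall>v\<in>carrier T. tle T u v \<and> tle T v u \<longrightarrow> u = v) \<and>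
     (\<forall>u\<in>carrier T. \<forall>v\<in>carrier T. \<forall>w\<in>carrier T.
        tle T u v \<and> tle T v w \<longrightarrow> tle T u w) \<and>
     (\<exists>r\<in>carrier T. \<forall>v\<in>carrier T. tle T r v) \<and>
     (\<forall>w\<in>carrier T. \<forall>u\<in>carrier T. \<forall>v\<in>carrier T.
        tle T u w \<and> tle T v w \<longrightarrow> tle T u v \<or> tle T v u)"

definition root :: "('a, 'm) otree_scheme \<Rightarrow> 'a" where
  "root T = (THE r. r \<in> carrier T \<and> (\<forall>v\<in>carrier T. tle T r v))"

definition imm_succ :: "('a, 'm) otree_scheme \<Rightarrow> 'a \<Rightarrow> 'a set" where
  "imm_succ T v = {w \<in> carrier T. tlt T v w \<and>
      \<not> (\<exists>u\<in>carrier T. tlt T v u \<and> tlt T u w)}"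

definition is_ordered_tree :: "('a, 'm) otree_scheme \<Rightarrow> bool" where
  "is_ordered_tree T \<longleftrightarrow> is_tree T \<and>
     (\<forall>v\<in>carrier T.
        (\<forall>a\<in>imm_succ T v. sib T a a) \<and>
        (\<forall>a\<in>imm_succ T v. \<forall>b\<in>imm_succ T v. sib T a b \<and> sib T b a \<longrightarrow> a = b) \<and>
        (\<forall>a\<in>imm_succ T v. \<forall>b\<in>imm_succ T v. \<forall>c\<in>imm_succ T v.
            sib T a b \<and> sib T b c \<longrightarrow> sib T a c) \<and>
        (\<forall>a\<in>imm_succ T v. \<forall>b\<in>imm_succ T v. sib T a b \<or> sib T b a))"

definition meet :: "('a, 'm) otree_scheme \<Rightarrow> 'a \<Rightarrow> 'a \<Rightarrow> 'a" where
  "meet T v w = (THE u. u \<in> carrier T \<and> tle T u v \<and> tle T u w \<and>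
      (\<forall>x\<in>carrier T. tle T x v \<and> tle T x w \<longrightarrow> tle T x u))"

definition succ_toward :: "('a, 'm) otree_scheme \<Rightarrow> 'a \<Rightarrow> 'a \<Rightarrow> 'a" where
  "succ_toward T m v = (THE c. c \<in> imm_succ T m \<and> tle T c v)"

definition lex :: "('a, 'm) otree_scheme \<Rightarrow> 'a \<Rightarrow> 'a \<Rightarrow> bool" where
  "lex T v w \<longleftrightarrow> tle T v w \<or>
     (\<not> tle T v w \<and> \<not> tle T w v \<and>
      sib T (succ_toward T (meet T v w) v) (succ_toward T (meet T v w) w))"

definition subtree :: "('a, 'm) otree_scheme \<Rightarrow> 'a set \<Rightarrow> bool" where
  "subtree T U \<longleftrightarrow> U \<noteq> {} \<and> U \<subseteq> carrier T \<and>
     (\<forall>w\<in>U. \<forall>v\<in>carrier T. tle T v w \<longrightarrow> v \<in> U)"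

definition restrict_tree :: "('a, 'm) otree_scheme \<Rightarrow> 'a set \<Rightarrow> ('a, 'm) otree_scheme" where
  "restrict_tree T U = T\<lparr>carrier := U\<rparr>"

definition morphism :: "('a, 'm) otree_scheme \<Rightarrow> ('b, 'n) otree_scheme \<Rightarrow> ('a \<Rightarrow> 'b) \<Rightarrow> bool" where
  "morphism S T e \<longleftrightarrow>
     (\<forall>v\<in>carrier S. e v \<in> carrier T) \<and>
     (\<forall>v\<in>carrier S. \<forall>w\<in>carrier S. e (meet S v w) = meet T (e v) (e w)) \<and>
     (\<forall>v\<in>carrier S. \<forall>w\<in>carrier S. lex S v w \<longrightarrow> lex T (e v) (e w)) \<and>
     e (root S) = root T"

definition rigid_surj :: "('b, 'n) otree_scheme \<Rightarrow> ('a, 'm) otree_scheme \<Rightarrow> ('b \<Rightarrow> 'a) \<Rightarrow> bool" where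
  "rigid_surj T S f \<longleftrightarrow>
     (\<forall>w\<in>carrier T. f w \<in> carrier S) \<and>
     (\<exists>e. morphism S T e \<and> (\<forall>s\<in>carrier S. f (e s) = s) \<and>
          (\<forall>w\<in>carrier T. tle T (e (f w)) w))"

end

theory Submission
  imports Defs
begin

lemma rt_simps[simp]:
  "carrier (restrict_tree T U) = U" "tle (restrict_tree T U) = tle T"
  "sib (restrict_tree T U) = sib T"
  by (simp_all add: restrict_tree_def)


lemma tr_refl: "is_tree T \<Longrightarrow> v \<in> carrier T \<Longrightarrow> tle T v v"
  unfolding is_tree_def by (elim conjE) (rule bspec)
lemma tr_antisym: "is_tree T \<Longrightarrow> u \<in> carrier T \<Longrightarrow> v \<in> carrier T \<Longrightarrow> tle T u v \<Longrightarrow> tle T v u \<Longrightarrow> u = v"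
  unfolding is_tree_def by (elim conjE) (meson)
lemma tr_trans: "is_tree T \<Longrightarrow> u \<in> carrier T \<Longrightarrow> v \<in> carrier T \<Longrightarrow> w \<in> carrier T \<Longrightarrow> tle T u v \<Longrightarrow> tle T v w \<Longrightarrow> tle T u w"
  unfolding is_tree_def by (elim conjE) (meson)
lemma tr_lin: "is_tree T \<Longrightarrow> u \<in> carrier T \<Longrightarrow> v \<in> carrier T \<Longrightarrow> w \<in> carrier T \<Longrightarrow> tle T u w \<Longrightarrow> tle T v w \<Longrightarrow> tle T u v \<or> tle T v u"
  unfolding is_tree_def by (elim conjE) (meson)
lemma tr_fin: "is_tree T \<Longrightarrow> finite (carrier T)"
  unfolding is_tree_def by (elim conjE)
lemma tr_root: "is_tree T \<Longrightarrow> \<exists>r\<in>carrier T. \<forall>v\<in>carrier T. tle T r v"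
  unfolding is_tree_def by (elim conjE)

lemma root_prop:
  assumes "is_tree T"
  shows "root T \<in> carrier T \<and> (\<forall>v\<in>carrier T. tle T (root T) v)"
proof -
  from assms obtain r where r: "r \<in> carrier T" "\<forall>v\<in>carrier T. tle T r v"
    using tr_root[OF assms] by blast
  have "root T = r" unfolding root_def
    apply (rule the_equality)
    using r apply blast
    using r assms tr_antisym by metis
  with r show ?thesis by simp
qed

lemma meet_exists:
  assumes T: "is_tree T" and v: "v \<in> carrier T" and w: "w \<in> carrier T"
  shows "\<exists>u. u \<in> carrier T \<and> tle T u v \<and> tle T u w \<and>
      (\<forall>x\<in>carrier T. tle T x v \<and> tle T x w \<longrightarrow> tle T x u)"
proof -
  define P where "P = {u \<in> carrier T. tle T u v \<and> tle T u w}"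
  define pr where "pr u = card {y \<in> carrier T. tle T y u}" for u
  have fin: "finite (carrier T)" using tr_fin[OF T] .
  have finP: "finite P" using fin unfolding P_def by simp
  have "root T \<in> P" using root_prop[OF T] v w unfolding P_def by blast
  hence neP: "P \<noteq> {}" by blast
  have "Max (pr ` P) \<in> pr ` P" using finP neP by simp
  then obtain u where u: "u \<in> P" "pr u = Max (pr ` P)" by auto
  have "tle T x u" if x: "x \<in> P" for x
  proof -
    have xc: "x \<in> carrier T" "tle T x v" using x unfolding P_def by auto
    have uc: "u \<in> carrier T" "tle T u v" using u unfolding P_def by auto
    have "tle T x u \<or> tle T u x" using tr_lin[OF T uc(1) xc(1) v] uc xc by blast
    thus ?thesis
    proof
      assume ux: "tle T u x"
      have sub: "{y \<in> carrier T. tle T y u} \<subseteq> {y \<in> carrier T. tle T y x}"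
        using tr_trans[OF T] ux xc uc by blast
      have "pr x \<le> pr u" using u(2) x finP by simp
      moreover have "pr u \<le> pr x" unfolding pr_def
        by (rule card_mono) (use fin sub in auto)
      ultimately have "card {y \<in> carrier T. tle T y u} = card {y \<in> carrier T. tle T y x}"
        unfolding pr_def by simp
      hence "{y \<in> carrier T. tle T y u} = {y \<in> carrier T. tle T y x}"
        using card_subset_eq[OF _ sub] fin by auto
      moreover have "x \<in> {y \<in> carrier T. tle T y x}" using tr_refl[OF T] xc by blast
      ultimately show ?thesis by blast
    qed simp
  qed
  thus ?thesis using u unfolding P_def by blast
qed

lemma meet_eqI:
  assumes T: "is_tree T" and "u \<in> carrier T" "tle T u v" "tle T u w"
    "\<forall>x\<in>carrier T. tle T x v \<and> tle T x w \<longrightarrow> tle T x u"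
  shows "meet T v w = u"
  unfolding meet_def
  apply (rule the_equality)
  using assms apply blast
  using assms tr_antisym by metis

lemma meet_prop:
  assumes T: "is_tree T" and v: "v \<in> carrier T" and w: "w \<in> carrier T"
  shows "meet T v w \<in> carrier T \<and> tle T (meet T v w) v \<and> tle T (meet T v w) w \<and>
      (\<forall>x\<in>carrier T. tle T x v \<and> tle T x w \<longrightarrow> tle T x (meet T v w))"
proof -
  obtain u where "u \<in> carrier T \<and> tle T u v \<and> tle T u w \<and>
      (\<forall>x\<in>carrier T. tle T x v \<and> tle T x w \<longrightarrow> tle T x u)"
    using meet_exists[OF assms] by blast
  moreover hence "meet T v w = u" using meet_eqI[OF T] by blast
  ultimately show ?thesis by simp
qed

lemma is_tree_restrict:
  assumes T: "is_tree T" and U: "subtree T U"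
  shows "is_tree (restrict_tree T U)"
proof -
  have r: "root T \<in> U" using root_prop[OF T] U unfolding subtree_def by blast
  have fin: "finite U" using tr_fin[OF T] U unfolding subtree_def by (meson rev_finite_subset)
  have sub: "U \<subseteq> carrier T" using U unfolding subtree_def by blast
  show ?thesis unfolding is_tree_def rt_simps
  proof (intro conjI)
    show "finite U" by fact
    show "U \<noteq> {}" using r by blast
    show "\<forall>v\<in>U. tle T v v" using tr_refl[OF T] sub by blast
    show "\<forall>u\<in>U. \<forall>v\<in>U. tle T u v \<and> tle T v u \<longrightarrow> u = v"
      using tr_antisym[OF T] sub by blast
    show "\<forall>u\<in>U. \<forall>v\<in>U. \<forall>w\<in>U. tle T u v \<and> tle T v w \<longrightarrow> tle T u w"
      using tr_trans[OF T] sub by blast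
    show "\<exists>r\<in>U. \<forall>v\<in>U. tle T r v" using r root_prop[OF T] sub by blast
    show "\<forall>w\<in>U. \<forall>u\<in>U. \<forall>v\<in>U. tle T u w \<and> tle T v w \<longrightarrow> tle T u v \<or> tle T v u"
      using tr_lin[OF T] sub by blast
  qed
qed

lemma meet_restrict:
  assumes T: "is_tree T" and U: "subtree T U" and v: "v \<in> U" and w: "w \<in> U"
  shows "meet (restrict_tree T U) v w = meet T v w"
proof -
  have sub: "U \<subseteq> carrier T" using U unfolding subtree_def by blast
  note m = meet_prop[OF T subsetD[OF sub v] subsetD[OF sub w]]
  have "meet T v w \<in> U" using m U v unfolding subtree_def by blast
  thus ?thesis using m sub
    by (intro meet_eqI[OF is_tree_restrict[OF T U]]) auto
qed

lemma succ_toward_restrict: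
  assumes U: "subtree T U" and v: "v \<in> U"
  shows "succ_toward (restrict_tree T U) m v = succ_toward T m v"
proof -
  have "(c \<in> imm_succ (restrict_tree T U) m \<and> tle T c v) = (c \<in> imm_succ T m \<and> tle T c v)" for c
  proof
    assume "c \<in> imm_succ (restrict_tree T U) m \<and> tle T c v"
    hence c: "c \<in> U" "tlt T m c" "\<not> (\<exists>u\<in>U. tlt T m u \<and> tlt T u c)" "tle T c v"
      unfolding imm_succ_def tlt_def by auto
    have "\<not> (\<exists>u\<in>carrier T. tlt T m u \<and> tlt T u c)"
    proof
      assume "\<exists>u\<in>carrier T. tlt T m u \<and> tlt T u c"
      then obtain u where "u \<in> carrier T" "tlt T m u" "tlt T u c" by blast
      moreover hence "u \<in> U" using U c(1) unfolding subtree_def tlt_def by blast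
      ultimately show False using c(3) by blast
    qed
    thus "c \<in> imm_succ T m \<and> tle T c v" using c U unfolding imm_succ_def subtree_def by blast
  next
    assume c: "c \<in> imm_succ T m \<and> tle T c v"
    hence cU: "c \<in> U" using U v unfolding imm_succ_def subtree_def by blast
    show "c \<in> imm_succ (restrict_tree T U) m \<and> tle T c v"
      using c cU U unfolding imm_succ_def subtree_def tlt_def by auto
  qed
  thus ?thesis unfolding succ_toward_def by simp
qed

lemma lex_restrict:
  assumes T: "is_tree T" and U: "subtree T U" and v: "v \<in> U" and w: "w \<in> U"
  shows "lex (restrict_tree T U) v w = lex T v w"
  unfolding lex_def using meet_restrict[OF assms] succ_toward_restrict[OF U v]
    succ_toward_restrict[OF U w] by simp

lemma root_restrict:
  assumes T: "is_tree T" and U: "subtree T U"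
  shows "root (restrict_tree T U) = root T"
proof -
  have sub: "U \<subseteq> carrier T" using U unfolding subtree_def by blast
  have r: "root T \<in> U" using root_prop[OF T] U unfolding subtree_def by blast
  have all: "\<forall>v\<in>U. tle T (root T) v" using root_prop[OF T] sub by blast
  show ?thesis unfolding root_def[of "restrict_tree T U"] rt_simps
  proof (rule the_equality)
    show "root T \<in> U \<and> (\<forall>v\<in>U. tle T (root T) v)" using r all by blast
    fix x assume x: "x \<in> U \<and> (\<forall>v\<in>U. tle T x v)"
    hence "tle T x (root T)" using r by blast
    moreover have "tle T (root T) x" using all x by blast
    ultimately show "x = root T" using tr_antisym[OF T] x r sub by blast
  qed
qed

lemma morph_mono:
  assumes S: "is_tree S" and T: "is_tree T" and e: "morphism S T e"
    and v: "v \<in> carrier S" and w: "w \<in> carrier S" and vw: "tle S v w"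
  shows "tle T (e v) (e w)"
proof -
  have "meet S v w = v" using S v w vw by (intro meet_eqI) (auto intro: tr_refl)
  hence "e v = meet T (e v) (e w)" using e v w unfolding morphism_def by metis
  thus ?thesis using meet_prop[OF T, of "e v" "e w"] e v w unfolding morphism_def by metis
qed

theorem lemma4p1:
  fixes S :: "('a, 'm) otree_scheme" and T :: "('b, 'n) otree_scheme"
    and f :: "'b \<Rightarrow> 'a" and T' :: "'b set"
  assumes "is_ordered_tree S" and "is_ordered_tree T"
    and "rigid_surj T S f"
    and "subtree T T'"
  shows "subtree S (f ` T') \<and>
         rigid_surj (restrict_tree T T') (restrict_tree S (f ` T')) f"
proof -
  have S: "is_tree S" and T: "is_tree T" using assms(1,2) unfolding is_ordered_tree_def by auto
  have U: "subtree T T'" by fact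
  have fS: "\<forall>w\<in>carrier T. f w \<in> carrier S" using assms(3) unfolding rigid_surj_def by blast
  obtain e where e: "morphism S T e" and fe: "\<forall>s\<in>carrier S. f (e s) = s"
    and ef: "\<forall>w\<in>carrier T. tle T (e (f w)) w"
    using assms(3) unfolding rigid_surj_def by blast
  have eS: "\<forall>v\<in>carrier S. e v \<in> carrier T" using e unfolding morphism_def by blast
  have subT: "T' \<subseteq> carrier T" using U unfolding subtree_def by blast
  have down: "v \<in> T'" if "w \<in> T'" "v \<in> carrier T" "tle T v w" for v w
    using U that unfolding subtree_def by blast
  have sub1: "subtree S (f ` T')"
    unfolding subtree_def
  proof (intro conjI ballI impI)
    show "f ` T' \<noteq> {}" using U unfolding subtree_def by blast
    show "f ` T' \<subseteq> carrier S" using fS subT by blast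
    fix y v assume y: "y \<in> f ` T'" and v: "v \<in> carrier S" and vy: "tle S v y"
    then obtain w where w: "w \<in> T'" "y = f w" by blast
    have wT: "w \<in> carrier T" using w subT by blast
    have "tle T (e v) (e (f w))" using morph_mono[OF S T e v fS[rule_format, OF wT]] vy w by simp
    moreover have "tle T (e (f w)) w" using ef wT by blast
    ultimately have "tle T (e v) w"
      using tr_trans[OF T] eS v fS wT by metis
    hence "e v \<in> T'" using down[OF w(1)] eS v by blast
    thus "v \<in> f ` T'" using fe v by (metis imageI)
  qed
  have subS: "f ` T' \<subseteq> carrier S" using sub1 unfolding subtree_def by blast
  have eT': "e v \<in> T'" if vv: "v \<in> f ` T'" for v
  proof -
    obtain w where w: "w \<in> T'" "v = f w" using vv by blast
    have wT: "w \<in> carrier T" using w subT by blast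
    show ?thesis using down[OF w(1) eS[rule_format, OF fS[rule_format, OF wT]]] ef wT w by blast
  qed
  have morph: "morphism (restrict_tree S (f ` T')) (restrict_tree T T') e"
    unfolding morphism_def
  proof (intro conjI ballI impI)
    fix v assume "v \<in> carrier (restrict_tree S (f ` T'))"
    thus "e v \<in> carrier (restrict_tree T T')" using eT' by simp
  next
    fix v w assume v: "v \<in> carrier (restrict_tree S (f ` T'))"
      and w: "w \<in> carrier (restrict_tree S (f ` T'))"
    hence v': "v \<in> f ` T'" and w': "w \<in> f ` T'" by auto
    show "e (meet (restrict_tree S (f ` T')) v w) =
          meet (restrict_tree T T') (e v) (e w)"
      using meet_restrict[OF S sub1 v' w'] meet_restrict[OF T U eT'[OF v'] eT'[OF w']]
        e subsetD[OF subS v'] subsetD[OF subS w'] unfolding morphism_def by metis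
  next
    fix v w assume v: "v \<in> carrier (restrict_tree S (f ` T'))"
      and w: "w \<in> carrier (restrict_tree S (f ` T'))"
      and l: "lex (restrict_tree S (f ` T')) v w"
    hence v': "v \<in> f ` T'" and w': "w \<in> f ` T'" by auto
    show "lex (restrict_tree T T') (e v) (e w)"
      using lex_restrict[OF S sub1 v' w'] lex_restrict[OF T U eT'[OF v'] eT'[OF w']]
        e subsetD[OF subS v'] subsetD[OF subS w'] l unfolding morphism_def by metis
  next
    show "e (root (restrict_tree S (f ` T'))) = root (restrict_tree T T')"
      using root_restrict[OF S sub1] root_restrict[OF T U] e unfolding morphism_def by simp
  qed
  have "rigid_surj (restrict_tree T T') (restrict_tree S (f ` T')) f"
    unfolding rigid_surj_def
  proof (intro conjI ballI exI[of _ e])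
    show "morphism (restrict_tree S (f ` T')) (restrict_tree T T') e" by (rule morph)
    fix s assume "s \<in> carrier (restrict_tree S (f ` T'))"
    thus "f (e s) = s" using fe subS by auto
  next
    fix w assume "w \<in> carrier (restrict_tree T T')"
    thus "f w \<in> carrier (restrict_tree S (f ` T'))" by simp
  next
    fix w assume "w \<in> carrier (restrict_tree T T')"
    thus "tle (restrict_tree T T') (e (f w)) w" using ef subT by auto
  qed
  with sub1 show ?thesis by simp
qed

end
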